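(* Let $1\le j\le d$ and let $X$ be a $d\times d$ positive semidefinite matrix of rank at least $j$. Then there exists a $d\times d$ matrix $W\succ 0$ such that $-X\in\partial\Delta_j(W)$ and $\Gamma_j(X)=\Delta_j(W)$.
   Context: For $x\in\mathbb{R}^d_{+}$ let $x_{(i)}$ denote its $i$-th largest coordinate. For $W\succ 0$ with eigenvalues $\lambda_1\le\dots\le\lambda_d$, $\Delta_j(W)\coloneqq-\sum_{i=1}^j\ln\lambda_i$. For $x\in\mathbb{R}^d_+$, let $k$ be the unique integer with $0\le k\le j-1$ such that $x_{(k)}>\frac{1}{j-k}\sum_{i>k}x_{(i)}\ge x_{(k+1)}$ (with $x_{(0)}=\infty$; such $k$ exists and is unique), and define $\gamma_j(x)\coloneqq\sum_{i=1}^k\ln x_{(i)}+(j-k)\ln\big(\frac{1}{j-k}\sum_{i=k+1}^d x_{(i)}\big)$, with $\ln 0=-\infty$. For $X\succeq 0$ with eigenvalue vector $\lambda$, $\Gamma_j(X)\coloneqq\gamma_j(\lambda)$. The subdifferential $\partial\Delta_j(W)$ is taken in the space of symmetric matrices with the trace inner product: $Y\in\partial\Delta_j(W)$ iff $\Delta_j(Z)\ge\Delta_j(W)+\mathrm{tr}((Z-W)Y)$ for all $Z\succ 0$. *)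

theory Defs
  imports "Jordan_Normal_Form.DL_Rank_Submatrix" "Jordan_Normal_Form.Char_Poly"
    "HOL-Library.Extended_Real"
begin

definition mat_trace :: "real mat \<Rightarrow> real" where
  "mat_trace A = (\<Sum>i<dim_row A. A $$ (i, i))"

definition sym_mat :: "nat \<Rightarrow> real mat \<Rightarrow> bool" where
  "sym_mat d A \<longleftrightarrow> A \<in> carrier_mat d d \<and> A\<^sup>T = A"

definition psd_mat :: "nat \<Rightarrow> real mat \<Rightarrow> bool" where
  "psd_mat d A \<longleftrightarrow> sym_mat d A \<and> (\<forall>v \<in> carrier_vec d. v \<bullet> (A *\<^sub>v v) \<ge> 0)"

definition pd_mat :: "nat \<Rightarrow> real mat \<Rightarrow> bool" where
  "pd_mat d A \<longleftrightarrow> sym_mat d A \<and> (\<forall>v \<in> carrier_vec d. v \<noteq> 0\<^sub>v d \<longrightarrow> v \<bullet> (A *\<^sub>v v) > 0)"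

definition eigvals :: "real mat \<Rightarrow> real list" where
  "eigvals A = (THE xs. sorted xs \<and> length xs = dim_row A \<and>
       char_poly A = (\<Prod>a\<leftarrow>xs. [:- a, 1:]))"

definition Delta :: "nat \<Rightarrow> real mat \<Rightarrow> real" where
  "Delta j W = - (\<Sum>i<j. ln (eigvals W ! i))"

definition eln :: "real \<Rightarrow> ereal" where
  "eln x = (if x = 0 then - \<infinity> else ereal (ln x))"

(* x_(i): i-th largest coordinate, 1-based *)
definition ord_coord :: "real list \<Rightarrow> nat \<Rightarrow> real" where
  "ord_coord x i = rev (sort x) ! (i - 1)"

(* the unique k with 0 <= k <= j-1 and
   x_(k) > 1/(j-k) sum_{i>k} x_(i) >= x_(k+1), with x_(0) = infinity *)
definition gamma_k :: "nat \<Rightarrow> real list \<Rightarrow> nat" where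
  "gamma_k j x = (THE k. k \<le> j - 1 \<and>
      (k = 0 \<or> ord_coord x k > (\<Sum>i\<in>{k<..length x}. ord_coord x i) / real (j - k)) \<and>
      (\<Sum>i\<in>{k<..length x}. ord_coord x i) / real (j - k) \<ge> ord_coord x (k + 1))"

definition gamma :: "nat \<Rightarrow> real list \<Rightarrow> ereal" where
  "gamma j x = (let k = gamma_k j x in
      (\<Sum>i\<in>{1..k}. eln (ord_coord x i))
      + ereal (real (j - k)) * eln ((\<Sum>i\<in>{k<..length x}. ord_coord x i) / real (j - k)))"

definition Gamma :: "nat \<Rightarrow> real mat \<Rightarrow> ereal" where
  "Gamma j X = gamma j (eigvals X)"

definition subdiff_Delta :: "nat \<Rightarrow> nat \<Rightarrow> real mat \<Rightarrow> real mat set" where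
  "subdiff_Delta d j W = {Y. sym_mat d Y \<and>
      (\<forall>Z. pd_mat d Z \<longrightarrow> Delta j Z \<ge> Delta j W + mat_trace ((Z - W) * Y))}"

end

theory Submission
  imports Defs "Jordan_Normal_Form.Schur_Decomposition"
begin


definition dg :: "real list \<Rightarrow> real mat" where
  "dg es = mat (length es) (length es) (\<lambda>(i,j). if i = j then es!i else 0)"

definition orth :: "nat \<Rightarrow> real mat \<Rightarrow> bool" where
  "orth n U \<longleftrightarrow> U \<in> carrier_mat n n \<and> U\<^sup>T * U = 1\<^sub>m n \<and> U * U\<^sup>T = 1\<^sub>m n"

lemma dg_carrier[simp]: "dg es \<in> carrier_mat (length es) (length es)"
  unfolding dg_def by auto

lemma conj_vec_real[simp]: "conjugate (v :: real vec) = v"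
  by (rule eq_vecI, auto)

lemma len_char_poly:
  fixes A :: "real mat"
  assumes "A \<in> carrier_mat n n" "char_poly A = (\<Prod>e\<leftarrow>es. [:- e, 1:])"
  shows "length es = n"
proof -
  have "degree (\<Prod>e\<leftarrow>es. [:- (e::real), 1:]) = length es"
    using degree_linear_factors[of uminus es] by simp
  with degree_monic_char_poly[OF assms(1)] assms(2) show ?thesis by auto
qed

lemma spectral_aux:
  fixes A :: "real mat"
  assumes "A \<in> carrier_mat n n" "A\<^sup>T = A" "char_poly A = (\<Prod>e\<leftarrow>es. [:- e, 1:])"
  shows "\<exists>U. orth n U \<and> A = U * dg es * U\<^sup>T"
  using assms
proof (induct es arbitrary: n A)
  case Nil
  have n: "n = 0" using len_char_poly[OF Nil(1) Nil(3)] by simp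
  have o: "orth n (1\<^sub>m 0)" unfolding orth_def n by simp
  have "A = 1\<^sub>m 0 * dg [] * (1\<^sub>m 0)\<^sup>T"
    by (rule eq_matI, insert Nil(1) n, auto simp: dg_def)
  with o show ?case by blast
next
  case (Cons e es n A)
  have A: "A \<in> carrier_mat n n" and As: "A\<^sup>T = A" using Cons(2,3) .
  from len_char_poly[OF A Cons(4)] have n: "n = Suc (length es)" by simp
  have e: "eigenvalue A e" unfolding eigenvalue_root_char_poly[OF A] Cons(4) by simp
  define v0 where "v0 = find_eigenvector A e"
  from find_eigenvector[OF A e] have "eigenvector A v0 e" unfolding v0_def .
  hence v0: "v0 \<in> carrier_vec n" "v0 \<noteq> 0\<^sub>v n" "A *\<^sub>v v0 = e \<cdot>\<^sub>v v0"
    unfolding eigenvector_def using carrier_matD(1)[OF A] by metis+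
  have v0v0: "v0 \<bullet> v0 > 0"
  proof -
    have "v0 \<bullet>c v0 > 0" using conjugate_square_greater_0_vec[OF v0(1)] v0(2) by blast
    thus ?thesis by simp
  qed
  define v where "v = (1 / sqrt (v0 \<bullet> v0)) \<cdot>\<^sub>v v0"
  have v: "v \<in> carrier_vec n" unfolding v_def using v0 by simp
  have vv: "v \<bullet> v = 1" unfolding v_def using v0(1) v0v0
    by (simp add: smult_scalar_prod_distrib scalar_prod_smult_distrib)
  have vnz: "v \<noteq> 0\<^sub>v n" using vv v by auto
  have Av: "A *\<^sub>v v = e \<cdot>\<^sub>v v" unfolding v_def using v0 A
    by (simp add: mult_mat_vec smult_smult_assoc mult.commute)
  interpret cof_vec_space n "TYPE(real)" .
  define b where "b = basis_completion v"
  from basis_completion[OF v vnz, folded b_def]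
  have dist_b: "distinct b" and indep: "\<not> lin_dep (set b)" and bc: "set b \<subseteq> carrier_vec n"
    and hdb: "hd b = v" and len_b: "length b = n" by auto
  define ws0 where "ws0 = gram_schmidt n b"
  from gram_schmidt_result[OF bc dist_b indep ws0_def]
  have ws0: "corthogonal ws0" "set ws0 \<subseteq> carrier_vec n" "length ws0 = n" using len_b by auto
  from hdb len_b n obtain bs where bv: "b = v # bs" by (cases b, auto)
  have hdws0: "hd ws0 = v" unfolding ws0_def bv using v by simp
  define ws where "ws = map (\<lambda>w. (1 / sqrt (w \<bullet> w)) \<cdot>\<^sub>v w) ws0"
  have lws: "length ws = n" unfolding ws_def using ws0 by simp
  have wsc: "\<And>i. i < n \<Longrightarrow> ws ! i \<in> carrier_vec n" unfolding ws_def using ws0 by auto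
  have ws0pos: "\<And>i. i < n \<Longrightarrow> ws0 ! i \<bullet> ws0 ! i > 0"
  proof -
    fix i assume i: "i < n"
    have c: "ws0 ! i \<in> carrier_vec n" using ws0 i by auto
    have "ws0 ! i \<bullet>c ws0 ! i \<noteq> 0" using corthogonalD[OF ws0(1), of i i] ws0 i by auto
    moreover have "ws0 ! i \<bullet>c ws0 ! i \<ge> 0" by (rule conjugate_square_ge_0_vec)
    ultimately show "ws0 ! i \<bullet> ws0 ! i > 0" by simp
  qed
  have ortho: "\<And>i j. i < n \<Longrightarrow> j < n \<Longrightarrow> ws ! i \<bullet> ws ! j = (if i = j then 1 else 0)"
  proof -
    fix i j assume i: "i < n" and j: "j < n"
    have ci: "ws0 ! i \<in> carrier_vec n" and cj: "ws0 ! j \<in> carrier_vec n" using ws0 i j by auto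
    have o: "ws0 ! i \<bullet> ws0 ! j = 0 \<longleftrightarrow> i \<noteq> j" using corthogonalD[OF ws0(1), of i j] ws0 i j by auto
    show "ws ! i \<bullet> ws ! j = (if i = j then 1 else 0)"
      unfolding ws_def using i j ws0 ci cj o ws0pos[OF i]
      by (auto simp: smult_scalar_prod_distrib scalar_prod_smult_distrib)
  qed
  have ws_0: "ws ! 0 = v" unfolding ws_def using hdws0 ws0 n vv
    by (cases ws0, auto)
  define W where "W = mat_of_cols n ws"
  have W: "W \<in> carrier_mat n n" unfolding W_def using lws by (metis mat_of_cols_carrier(1))
  have colW: "\<And>i. i < n \<Longrightarrow> col W i = ws ! i" unfolding W_def using lws wsc by simp
  have WtW: "W\<^sup>T * W = 1\<^sub>m n"
    by (rule eq_matI, insert W colW ortho, auto)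
  have WWt: "W * W\<^sup>T = 1\<^sub>m n"
    using mat_mult_left_right_inverse[OF _ W WtW] W by simp
  define A' where "A' = W\<^sup>T * A * W"
  have Wt: "W\<^sup>T \<in> carrier_mat n n" using W by simp
  have A': "A' \<in> carrier_mat n n" unfolding A'_def using W A by auto
  have A's: "A'\<^sup>T = A'"
  proof -
    have 1: "(W\<^sup>T * A * W)\<^sup>T = W\<^sup>T * (W\<^sup>T * A)\<^sup>T"
      by (rule transpose_mult[of _ n n _ n], insert W A, auto)
    have 2: "(W\<^sup>T * A)\<^sup>T = A\<^sup>T * W"
      by (subst transpose_mult[of _ n n _ n], insert W A, auto)
    have 3: "W\<^sup>T * (A * W) = W\<^sup>T * A * W" using W A by (simp add: assoc_mult_mat[of _ n n _ n _ n])
    show ?thesis unfolding A'_def 1 2 As 3 ..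
  qed
  have A'col: "\<And>i. i < n \<Longrightarrow> A' $$ (i, 0) = (if i = 0 then e else 0)"
  proof -
    fix i assume i: "i < n"
    have "A' = W\<^sup>T * (A * W)" unfolding A'_def using W A by (simp add: assoc_mult_mat[of _ n n _ n _ n])
    hence "A' $$ (i, 0) = row (W\<^sup>T) i \<bullet> col (A * W) 0"
      using W A i n by (simp add: index_mult_mat)
    also have "row (W\<^sup>T) i = ws ! i" using colW i W by simp
    also have "col (A * W) 0 = A *\<^sub>v col W 0" by (rule col_mult2[OF A W], insert n, simp)
    also have "col W 0 = v" using colW[of 0] n ws_0 by simp
    also have "ws ! i \<bullet> (A *\<^sub>v v) = e * (ws ! i \<bullet> v)" unfolding Av
      using wsc[OF i] v by simp
    also have "ws ! i \<bullet> v = (if i = 0 then 1 else 0)" using ortho[OF i, of 0] n ws_0 by simp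
    finally show "A' $$ (i, 0) = (if i = 0 then e else 0)" by simp
  qed
  have A'row: "\<And>i. i < n \<Longrightarrow> A' $$ (0, i) = (if i = 0 then e else 0)"
  proof -
    fix i assume i: "i < n"
    have "A' $$ (0, i) = A'\<^sup>T $$ (i, 0)" using A' i n by simp
    thus "A' $$ (0, i) = (if i = 0 then e else 0)" using A's A'col[OF i] by simp
  qed
  define m where "m = length es"
  have nm: "n = 1 + m" unfolding m_def n by simp
  define A3 where "A3 = mat m m (\<lambda>(i,j). A' $$ (Suc i, Suc j))"
  have A3: "A3 \<in> carrier_mat m m" unfolding A3_def by simp
  have A3s: "A3\<^sup>T = A3"
  proof (rule eq_matI)
    fix i j assume "i < dim_row A3" "j < dim_col A3"
    hence ij: "i < m" "j < m" using A3 by auto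
    have "A' $$ (Suc j, Suc i) = A'\<^sup>T $$ (Suc i, Suc j)" using A' ij nm by simp
    thus "A3\<^sup>T $$ (i, j) = A3 $$ (i, j)" unfolding A3_def using ij A's by simp
  qed (insert A3, auto)
  define A1 where "A1 = mat 1 1 (\<lambda>_. e)"
  have A'blk: "A' = four_block_mat A1 (0\<^sub>m 1 m) (0\<^sub>m m 1) A3"
  proof (rule eq_matI)
    fix i j assume ij: "i < dim_row (four_block_mat A1 (0\<^sub>m 1 m) (0\<^sub>m m 1) A3)"
      "j < dim_col (four_block_mat A1 (0\<^sub>m 1 m) (0\<^sub>m m 1) A3)"
    hence ij': "i < n" "j < n" using A3 nm unfolding A1_def by auto
    show "A' $$ (i, j) = four_block_mat A1 (0\<^sub>m 1 m) (0\<^sub>m m 1) A3 $$ (i, j)"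
    proof (cases "i = 0")
      case True thus ?thesis using ij ij' A'row[of j] A3 unfolding A1_def by auto
    next
      case False
      show ?thesis
      proof (cases "j = 0")
        case True thus ?thesis using ij ij' A'col[of i] A3 False unfolding A1_def by auto
      next
        case F2: False
        from False F2 obtain i' j' where "i = Suc i'" "j = Suc j'" by (cases i; cases j; auto)
        thus ?thesis using ij ij' A3 False F2 unfolding A1_def A3_def by auto
      qed
    qed
  qed (insert A' A3 nm, auto simp: A1_def)
  have sim: "similar_mat A' A" unfolding similar_mat_def similar_mat_wit_def
    by (rule exI[of _ "W\<^sup>T"], rule exI[of _ W], insert A' A W WtW WWt, auto simp: A'_def Let_def)
  have "char_poly A' = char_poly A1 * char_poly A3" unfolding A'blk
    by (rule char_poly_four_block_zeros_col, insert A3, auto simp: A1_def)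
  also have "char_poly A1 = [: -e, 1:]" by (simp add: A1_def char_poly_defs det_def sign_def)
  finally have "[: -e, 1:] * char_poly A3 = [: -e, 1:] * (\<Prod>e\<leftarrow>es. [:- e, 1:])"
    using char_poly_similar[OF sim] Cons(4) by simp
  hence cp3: "char_poly A3 = (\<Prod>e\<leftarrow>es. [:- e, 1:])"
    by (metis mult_cancel_left pCons_eq_0_iff zero_neq_one)
  from Cons(1)[OF A3 A3s cp3] obtain P3 where P3: "orth m P3" and A3eq: "A3 = P3 * dg es * P3\<^sup>T" by blast
  from P3 have P3c: "P3 \<in> carrier_mat m m" and P3o: "P3\<^sup>T * P3 = 1\<^sub>m m" "P3 * P3\<^sup>T = 1\<^sub>m m"
    unfolding orth_def by auto
  have dgc: "dg es \<in> carrier_mat m m" unfolding m_def by simp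
  define B where "B = four_block_mat (1\<^sub>m 1) (0\<^sub>m 1 m) (0\<^sub>m m 1) P3"
  have Bc: "B \<in> carrier_mat n n" unfolding B_def nm
    by (rule four_block_carrier_mat[OF one_carrier_mat P3c])
  have Bt: "B\<^sup>T = four_block_mat (1\<^sub>m 1) (0\<^sub>m 1 m) (0\<^sub>m m 1) P3\<^sup>T" unfolding B_def
    by (subst transpose_four_block_mat, insert P3c, auto)
  have Dblk: "dg (e # es) = four_block_mat A1 (0\<^sub>m 1 m) (0\<^sub>m m 1) (dg es)"
    by (rule eq_matI, auto simp: dg_def A1_def m_def)
  have BtB: "B\<^sup>T * B = 1\<^sub>m n" unfolding Bt unfolding B_def nm
    by (subst mult_four_block_mat, insert P3c P3o, auto)
  have BBt: "B * B\<^sup>T = 1\<^sub>m n" unfolding Bt unfolding B_def nm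
    by (subst mult_four_block_mat, insert P3c P3o, auto)
  have A1c: "A1 \<in> carrier_mat 1 1" unfolding A1_def by simp
  have BD: "B * dg (e # es) = four_block_mat A1 (0\<^sub>m 1 m) (0\<^sub>m m 1) (P3 * dg es)" unfolding B_def Dblk
    by (subst mult_four_block_mat, insert P3c dgc A1c, auto)
  have BDB: "B * dg (e # es) * B\<^sup>T = A'" unfolding BD Bt A'blk A3eq
    by (subst mult_four_block_mat, insert P3c dgc A1c, auto)
  define U where "U = W * B"
  have Uc: "U \<in> carrier_mat n n" unfolding U_def using W Bc by simp
  have Ut': "(W * B)\<^sup>T = B\<^sup>T * W\<^sup>T" by (rule transpose_mult[OF W Bc])
  hence Ut: "U\<^sup>T = B\<^sup>T * W\<^sup>T" unfolding U_def .
  have "U\<^sup>T * U = B\<^sup>T * (W\<^sup>T * W) * B" unfolding U_def Ut' using W Bc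
    by (simp add: assoc_mult_mat[of _ n n _ n _ n])
  hence UtU: "U\<^sup>T * U = 1\<^sub>m n" using WtW BtB Bc by simp
  have "U * U\<^sup>T = W * (B * B\<^sup>T) * W\<^sup>T" unfolding U_def Ut' using W Bc
    by (simp add: assoc_mult_mat[of _ n n _ n _ n])
  hence UUt: "U * U\<^sup>T = 1\<^sub>m n" using WWt BBt W by simp
  have "A = (W * W\<^sup>T) * A * (W * W\<^sup>T)" using WWt A by simp
  also have "\<dots> = W * A' * W\<^sup>T" unfolding A'_def using W A
    by (simp add: assoc_mult_mat[of _ n n _ n _ n])
  also have "\<dots> = W * (B * dg (e # es) * B\<^sup>T) * W\<^sup>T" unfolding BDB ..
  also have "\<dots> = U * dg (e # es) * U\<^sup>T" unfolding U_def Ut' using W Bc dg_carrier[of "e # es"] n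
    by (simp add: assoc_mult_mat[of _ n n _ n _ n])
  finally show ?case using Uc UtU UUt unfolding orth_def by blast
qed


lemma herm_eig_real:
  fixes A :: "real mat"
  assumes A: "A \<in> carrier_mat n n" "A\<^sup>T = A"
    and ev: "eigenvalue (map_mat complex_of_real A) c"
  shows "Im c = 0"
proof -
  let ?C = "map_mat complex_of_real A"
  from ev obtain v where "eigenvector ?C v c" unfolding eigenvalue_def by auto
  hence v: "v \<in> carrier_vec n" "v \<noteq> 0\<^sub>v n" "?C *\<^sub>v v = c \<cdot>\<^sub>v v"
    unfolding eigenvector_def using A by auto
  have sym: "\<And>a b. a < n \<Longrightarrow> b < n \<Longrightarrow> A $$ (a, b) = A $$ (b, a)"
  proof -
    fix a b assume "a < n" "b < n"
    hence "A\<^sup>T $$ (b, a) = A $$ (a, b)" using A(1) by simp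
    thus "A $$ (a, b) = A $$ (b, a)" using A(2) by metis
  qed
  define s where "s = (\<Sum>a<n. cnj (v $ a) * (?C *\<^sub>v v) $ a)"
  define N where "N = (\<Sum>a<n. cnj (v $ a) * v $ a)"
  have s1: "s = c * N" unfolding s_def N_def v(3) using v(1)
    by (auto simp: sum_distrib_left intro!: sum.cong)
  have s2: "s = (\<Sum>a<n. \<Sum>b<n. cnj (v $ a) * complex_of_real (A $$ (a, b)) * v $ b)"
    unfolding s_def using v(1) A
    by (auto simp: sum_distrib_left scalar_prod_def mult.assoc intro!: sum.cong)
  have "cnj s = (\<Sum>a<n. \<Sum>b<n. v $ a * complex_of_real (A $$ (a, b)) * cnj (v $ b))"
    unfolding s2 by (simp add: cnj_sum)
  also have "\<dots> = (\<Sum>b<n. \<Sum>a<n. v $ a * complex_of_real (A $$ (a, b)) * cnj (v $ b))"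
    by (rule sum.swap)
  also have "\<dots> = s" unfolding s2
    by (auto simp: sym mult.commute mult.left_commute intro!: sum.cong)
  finally have cs: "cnj s = s" .
  have Nr: "N = complex_of_real (\<Sum>a<n. (cmod (v $ a))\<^sup>2)" unfolding N_def of_real_sum
    by (rule sum.cong, simp, subst complex_norm_square, simp add: mult.commute)
  obtain a where a: "a < n" "v $ a \<noteq> 0" using v(1,2) by (metis eq_vecI carrier_vecD index_zero_vec)
  have "(\<Sum>a<n. (cmod (v $ a))\<^sup>2) > 0"
  proof -
    have "(\<Sum>a<n. (cmod (v $ a))\<^sup>2) \<ge> (cmod (v $ a))\<^sup>2"
      by (rule member_le_sum, insert a, auto)
    moreover have "(cmod (v $ a))\<^sup>2 > 0" using a by simp
    ultimately show ?thesis by linarith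
  qed
  hence N0: "N \<noteq> 0" unfolding Nr by (metis of_real_eq_0_iff order_less_irrefl)
  have cN: "cnj N = N" unfolding Nr by (rule complex_cnj_complex_of_real)
  from cs s1 have "cnj c * N = c * N" using cN by simp
  hence "cnj c = c" using N0 by simp
  thus "Im c = 0" by (metis Reals_cnj_iff complex_is_Real_iff)
qed

lemma real_split:
  fixes A :: "real mat"
  assumes A: "A \<in> carrier_mat n n" "A\<^sup>T = A"
  shows "\<exists>es. char_poly A = (\<Prod>e\<leftarrow>es. [:- e, 1:])"
proof -
  let ?C = "map_mat complex_of_real A"
  have C: "?C \<in> carrier_mat n n" using A by simp
  from char_poly_factorized[OF C] obtain cs where cs: "char_poly ?C = (\<Prod>a\<leftarrow>cs. [:- a, 1:])" by blast
  have re: "\<And>c. c \<in> set cs \<Longrightarrow> Im c = 0"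
  proof -
    fix c assume c: "c \<in> set cs"
    have "poly (char_poly ?C) c = 0" unfolding cs using c
      by (auto simp: poly_prod_list prod_list_zero_iff)
    hence "eigenvalue ?C c" using eigenvalue_root_char_poly[OF C] by simp
    thus "Im c = 0" by (rule herm_eig_real[OF A])
  qed
  have cs': "cs = map (complex_of_real \<circ> Re) cs" using re
    by (induct cs, auto simp: complex_eq_iff)
  interpret mp: map_poly_inj_idom_hom "complex_of_real" ..
  have "map_poly complex_of_real (char_poly A) = char_poly ?C"
    by (rule sym, rule of_real_hom.char_poly_hom[OF A(1)])
  also have "\<dots> = map_poly complex_of_real (\<Prod>e\<leftarrow>map Re cs. [:- e, 1:])"
    unfolding cs by (subst cs', simp add: mp.hom_prod_list o_def hom_distribs)
  finally have "char_poly A = (\<Prod>e\<leftarrow>map Re cs. [:- e, 1:])" by simp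
  thus ?thesis by blast
qed


lemma prod_list_mset_eq: "(\<Prod>e\<leftarrow>xs. f e) = prod_mset (image_mset f (mset xs))"
  by (induct xs) auto

lemma prod_lin_mset:
  "(\<Prod>e\<leftarrow>xs. [:- (e::real), 1:]) = (\<Prod>e\<leftarrow>ys. [:- e, 1:]) \<Longrightarrow> mset xs = mset ys"
proof (induct xs arbitrary: ys)
  case Nil
  have "degree (\<Prod>e\<leftarrow>ys. [:- (e::real), 1:]) = length ys"
    using degree_linear_factors[of uminus ys] by simp
  with Nil show ?case by simp
next
  case (Cons x xs ys)
  have "poly (\<Prod>e\<leftarrow>ys. [:- e, 1:]) x = 0" unfolding Cons(2)[symmetric] by simp
  hence xy: "x \<in> set ys" by (auto simp: poly_prod_list prod_list_zero_iff)
  have ms: "mset ys = mset (x # remove1 x ys)" using xy by simp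
  have "(\<Prod>e\<leftarrow>ys. [:- e, 1:]) = (\<Prod>e\<leftarrow>x # remove1 x ys. [:- e, 1:])"
    unfolding prod_list_mset_eq ms ..
  hence "[:- x, 1:] * (\<Prod>e\<leftarrow>xs. [:- e, 1:]) = [:- x, 1:] * (\<Prod>e\<leftarrow>remove1 x ys. [:- e, 1:])"
    using Cons(2) by simp
  hence "(\<Prod>e\<leftarrow>xs. [:- e, 1:]) = (\<Prod>e\<leftarrow>remove1 x ys. [:- e, 1:])"
    by (metis mult_cancel_left pCons_eq_0_iff zero_neq_one)
  from Cons(1)[OF this] have "mset xs = mset (remove1 x ys)" .
  thus ?case unfolding ms by (simp only: mset.simps)
qed

lemma prod_lin_perm:
  "mset xs = mset ys \<Longrightarrow> (\<Prod>e\<leftarrow>xs. [:- (e::real), 1:]) = (\<Prod>e\<leftarrow>ys. [:- e, 1:])"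
  unfolding prod_list_mset_eq by simp

lemma eigvals_char:
  fixes A :: "real mat"
  assumes A: "A \<in> carrier_mat n n" "A\<^sup>T = A"
  shows "sorted (eigvals A) \<and> length (eigvals A) = n \<and>
         char_poly A = (\<Prod>a\<leftarrow>eigvals A. [:- a, 1:])"
proof -
  from real_split[OF A] obtain es where es: "char_poly A = (\<Prod>e\<leftarrow>es. [:- e, 1:])" by blast
  let ?P = "\<lambda>xs. sorted xs \<and> length xs = dim_row A \<and> char_poly A = (\<Prod>a\<leftarrow>xs. [:- a, 1:])"
  have len: "length es = n" by (rule len_char_poly[OF A(1) es])
  have ex: "?P (sort es)"
  proof (intro conjI)
    show "sorted (sort es)" by simp
    show "length (sort es) = dim_row A" using len A(1) by simp
    show "char_poly A = (\<Prod>a\<leftarrow>sort es. [:- a, 1:])" unfolding es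
      by (rule prod_lin_perm, simp)
  qed
  have un: "\<And>ys. ?P ys \<Longrightarrow> ys = sort es"
  proof -
    fix ys assume "?P ys"
    hence "mset ys = mset (sort es)" "sorted ys"
      using ex prod_lin_mset[of ys "sort es"] by (metis, blast)
    from properties_for_sort[OF this] show "ys = sort es" by (metis sorted_sort sorted_sort_id)
  qed
  have e: "eigvals A = sort es" unfolding eigvals_def by (rule the_equality, rule ex, rule un)
  show ?thesis unfolding e using ex carrier_matD(1)[OF A(1)] by metis
qed

lemma eigvals_unique:
  fixes A :: "real mat"
  assumes "A \<in> carrier_mat n n" "sorted xs" "length xs = n" "char_poly A = (\<Prod>a\<leftarrow>xs. [:- a, 1:])"
  shows "eigvals A = xs"
  unfolding eigvals_def
proof (rule the_equality)
  show "sorted xs \<and> length xs = dim_row A \<and> char_poly A = (\<Prod>a\<leftarrow>xs. [:- a, 1:])" using assms by auto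
  fix ys assume "sorted ys \<and> length ys = dim_row A \<and> char_poly A = (\<Prod>a\<leftarrow>ys. [:- a, 1:])"
  hence "mset ys = mset xs" "sorted ys" using assms(4) prod_lin_mset[of ys xs] by (metis, blast)
  from properties_for_sort[OF this] show "ys = xs" using assms(2) by (simp add: sorted_sort_id)
qed

lemma spectral:
  fixes A :: "real mat"
  assumes A: "A \<in> carrier_mat n n" "A\<^sup>T = A" and es: "mset es = mset (eigvals A)"
  shows "\<exists>U. orth n U \<and> A = U * dg es * U\<^sup>T"
proof -
  from eigvals_char[OF A] have "char_poly A = (\<Prod>a\<leftarrow>eigvals A. [:- a, 1:])" by simp
  also have "\<dots> = (\<Prod>a\<leftarrow>es. [:- a, 1:])" by (rule prod_lin_perm, rule es[symmetric])
  finally show ?thesis by (rule spectral_aux[OF A])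
qed


lemma orth_cols:
  assumes "orth n U" "l < n" "m < n"
  shows "(\<Sum>a<n. U $$ (a, l) * U $$ (a, m)) = (if l = m then 1 else 0)"
proof -
  from assms have U: "U \<in> carrier_mat n n" and "U\<^sup>T * U = 1\<^sub>m n" unfolding orth_def by auto
  hence "(U\<^sup>T * U) $$ (l, m) = (if l = m then 1 else 0)" using assms by simp
  moreover have "(U\<^sup>T * U) $$ (l, m) = (\<Sum>a<n. U $$ (a, l) * U $$ (a, m))"
    using U assms by (simp add: scalar_prod_def lessThan_atLeast0)
  ultimately show ?thesis by simp
qed

lemma orth_rows:
  assumes "orth n U" "a < n" "b < n"
  shows "(\<Sum>m<n. U $$ (a, m) * U $$ (b, m)) = (if a = b then 1 else 0)"
proof -
  from assms have U: "U \<in> carrier_mat n n" and "U * U\<^sup>T = 1\<^sub>m n" unfolding orth_def by auto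
  hence "(U * U\<^sup>T) $$ (a, b) = (if a = b then 1 else 0)" using assms by simp
  moreover have "(U * U\<^sup>T) $$ (a, b) = (\<Sum>m<n. U $$ (a, m) * U $$ (b, m))"
    using U assms by (simp add: scalar_prod_def lessThan_atLeast0)
  ultimately show ?thesis by simp
qed

lemma spec_entry:
  assumes "orth n U" "length es = n" "a < n" "b < n"
  shows "(U * dg es * U\<^sup>T) $$ (a, b) = (\<Sum>m<n. es ! m * U $$ (a, m) * U $$ (b, m))"
proof -
  from assms have U: "U \<in> carrier_mat n n" unfolding orth_def by auto
  have D: "dg es \<in> carrier_mat n n" using assms(2) by auto
  have "(U * dg es * U\<^sup>T) $$ (a, b) = (\<Sum>m<n. (U * dg es) $$ (a, m) * U $$ (b, m))"
    using U D assms by (simp add: scalar_prod_def lessThan_atLeast0 del: assoc_mult_mat)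
  also have "\<dots> = (\<Sum>m<n. es ! m * U $$ (a, m) * U $$ (b, m))"
  proof (rule sum.cong[OF refl])
    fix m assume m: "m \<in> {..<n}"
    have "(U * dg es) $$ (a, m) = (\<Sum>c<n. U $$ (a, c) * dg es $$ (c, m))"
      using U D assms m by (simp add: scalar_prod_def lessThan_atLeast0)
    also have "\<dots> = (\<Sum>c<n. if c = m then U $$ (a, m) * es ! m else 0)"
      by (rule sum.cong, insert m assms, auto simp: dg_def)
    also have "\<dots> = U $$ (a, m) * es ! m" using m by simp
    finally show "(U * dg es) $$ (a, m) * U $$ (b, m) = es ! m * U $$ (a, m) * U $$ (b, m)" by simp
  qed
  finally show ?thesis .
qed

lemma trace_prod:
  assumes "A \<in> carrier_mat n n" "B \<in> carrier_mat n n"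
  shows "mat_trace (A * B) = (\<Sum>a<n. \<Sum>b<n. A $$ (a, b) * B $$ (b, a))"
  unfolding mat_trace_def using assms by (simp add: scalar_prod_def lessThan_atLeast0)


lemma quad_sum:
  fixes p e :: "nat \<Rightarrow> real" and U :: "nat \<Rightarrow> nat \<Rightarrow> real"
  shows "(\<Sum>a<n. \<Sum>b<n. p a * p b * (\<Sum>m<n. e m * U a m * U b m)) =
         (\<Sum>m<n. e m * (\<Sum>a<n. U a m * p a)\<^sup>2)"
proof -
  have "(\<Sum>a<n. \<Sum>b<n. p a * p b * (\<Sum>m<n. e m * U a m * U b m)) =
        (\<Sum>a<n. \<Sum>b<n. \<Sum>m<n. e m * (U a m * p a) * (U b m * p b))"
    by (simp add: sum_distrib_left mult_ac)
  also have "\<dots> = (\<Sum>a<n. \<Sum>m<n. \<Sum>b<n. e m * (U a m * p a) * (U b m * p b))"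
    by (rule sum.cong[OF refl], rule sum.swap)
  also have "\<dots> = (\<Sum>m<n. \<Sum>a<n. \<Sum>b<n. e m * (U a m * p a) * (U b m * p b))"
    by (rule sum.swap)
  also have "\<dots> = (\<Sum>m<n. e m * (\<Sum>a<n. U a m * p a)\<^sup>2)"
    by (simp add: power2_eq_square sum_distrib_left sum_distrib_right mult_ac)
  finally show ?thesis .
qed

lemma trace_sum:
  fixes mu x :: "nat \<Rightarrow> real" and U V :: "nat \<Rightarrow> nat \<Rightarrow> real"
  shows "(\<Sum>a<n. \<Sum>b<n. (\<Sum>l<n. mu l * V a l * V b l) * (\<Sum>m<n. x m * U b m * U a m)) =
         (\<Sum>l<n. \<Sum>m<n. mu l * x m * (\<Sum>a<n. V a l * U a m)\<^sup>2)"
proof -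
  have "(\<Sum>a<n. \<Sum>b<n. (\<Sum>l<n. mu l * V a l * V b l) * (\<Sum>m<n. x m * U b m * U a m)) =
        (\<Sum>a<n. \<Sum>b<n. \<Sum>m<n. \<Sum>l<n. mu l * x m * (V a l * U a m) * (V b l * U b m))"
    by (simp add: sum_distrib_left sum_distrib_right mult_ac)
  also have "\<dots> = (\<Sum>a<n. \<Sum>b<n. \<Sum>l<n. \<Sum>m<n. mu l * x m * (V a l * U a m) * (V b l * U b m))"
    by (rule sum.cong[OF refl], rule sum.cong[OF refl], rule sum.swap)
  also have "\<dots> = (\<Sum>a<n. \<Sum>l<n. \<Sum>b<n. \<Sum>m<n. mu l * x m * (V a l * U a m) * (V b l * U b m))"
    by (rule sum.cong[OF refl], rule sum.swap)
  also have "\<dots> = (\<Sum>l<n. \<Sum>a<n. \<Sum>b<n. \<Sum>m<n. mu l * x m * (V a l * U a m) * (V b l * U b m))"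
    by (rule sum.swap)
  also have "\<dots> = (\<Sum>l<n. \<Sum>a<n. \<Sum>m<n. \<Sum>b<n. mu l * x m * (V a l * U a m) * (V b l * U b m))"
    by (rule sum.cong[OF refl], rule sum.cong[OF refl], rule sum.swap)
  also have "\<dots> = (\<Sum>l<n. \<Sum>m<n. \<Sum>a<n. \<Sum>b<n. mu l * x m * (V a l * U a m) * (V b l * U b m))"
    by (rule sum.cong[OF refl], rule sum.swap)
  also have "\<dots> = (\<Sum>l<n. \<Sum>m<n. mu l * x m * (\<Sum>a<n. V a l * U a m)\<^sup>2)"
    by (simp add: power2_eq_square sum_distrib_left sum_distrib_right mult_ac)
  finally show ?thesis .
qed


lemma lp_bound:
  fixes mu w :: "nat \<Rightarrow> real"
  assumes mono: "\<And>i i'. k \<le> i \<Longrightarrow> i \<le> i' \<Longrightarrow> i' < n \<Longrightarrow> mu i \<le> mu i'"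
    and w: "\<And>i. k \<le> i \<Longrightarrow> i < n \<Longrightarrow> 0 \<le> w i \<and> w i \<le> 1"
    and sumw: "(\<Sum>i\<in>{k..<n}. w i) = real c" and c: "1 \<le> c" "k + c \<le> n"
  shows "(\<Sum>i\<in>{k..<k+c}. mu i) \<le> (\<Sum>i\<in>{k..<n}. mu i * w i)"
proof -
  define th where "th = mu (k + c - 1)"
  have sub: "{k..<k+c} \<subseteq> {k..<n}" using c by auto
  have "(\<Sum>i\<in>{k..<k+c}. mu i) = (\<Sum>i\<in>{k..<n}. if i < k + c then mu i else 0)"
    by (rule sum.mono_neutral_cong_left, insert sub, auto)
  hence "(\<Sum>i\<in>{k..<n}. mu i * w i) - (\<Sum>i\<in>{k..<k+c}. mu i)
      = (\<Sum>i\<in>{k..<n}. mu i * w i - (if i < k + c then mu i else 0))"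
    by (simp add: sum_subtractf)
  also have "\<dots> \<ge> (\<Sum>i\<in>{k..<n}. th * w i - (if i < k + c then th else 0))"
  proof (rule sum_mono)
    fix i assume i: "i \<in> {k..<n}"
    show "th * w i - (if i < k + c then th else 0) \<le> mu i * w i - (if i < k + c then mu i else 0)"
    proof (cases "i < k + c")
      case True
      hence "mu i \<le> th" unfolding th_def using i c by (intro mono, auto)
      moreover have "w i \<le> 1" using w i by auto
      ultimately have "(mu i - th) * (w i - 1) \<ge> 0" by (intro mult_nonpos_nonpos, auto)
      thus ?thesis using True by (simp add: algebra_simps)
    next
      case False
      hence "th \<le> mu i" unfolding th_def using i c by (intro mono, auto)
      moreover have "w i \<ge> 0" using w i by auto
      ultimately have "(mu i - th) * w i \<ge> 0" by simp
      thus ?thesis using False by (simp add: algebra_simps)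
    qed
  qed
  also have "(\<Sum>i\<in>{k..<n}. th * w i - (if i < k + c then th else 0))
      = th * (\<Sum>i\<in>{k..<n}. w i) - (\<Sum>i\<in>{k..<n}. if i < k + c then th else 0)"
    by (simp add: sum_subtractf sum_distrib_left)
  also have "(\<Sum>i\<in>{k..<n}. if i < k + c then th else 0) = (\<Sum>i\<in>{k..<k+c}. th)"
    by (rule sum.mono_neutral_cong_right, insert sub, auto)
  also have "\<dots> = th * real c" by simp
  finally show ?thesis unfolding sumw by simp
qed


lemma sum_if_filter: "(\<Sum>t<(n::nat). if P t then f t else 0) = (\<Sum>t\<in>{t\<in>{..<n}. P t}. f t)"
  by (subst sum.inter_filter, auto)

lemma rearr:
  fixes mu x :: "nat \<Rightarrow> real" and M :: "nat \<Rightarrow> nat \<Rightarrow> real"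
  assumes mono: "\<And>i i'. i \<le> i' \<Longrightarrow> i' < n \<Longrightarrow> mu i \<le> mu i'"
    and anti: "\<And>i i'. i \<le> i' \<Longrightarrow> i' < n \<Longrightarrow> x i' \<le> x i"
    and xpos: "\<And>i. i < n \<Longrightarrow> 0 \<le> x i"
    and Mpos: "\<And>l m. l < n \<Longrightarrow> m < n \<Longrightarrow> 0 \<le> M l m"
    and rows: "\<And>l. l < n \<Longrightarrow> (\<Sum>m<n. M l m) = 1"
    and cols: "\<And>m. m < n \<Longrightarrow> (\<Sum>l<n. M l m) = 1"
  shows "(\<Sum>l<n. mu l * x l) \<le> (\<Sum>l<n. \<Sum>m<n. mu l * x m * M l m)"
proof -
  define xe where "xe t = (if t < n then x t else 0)" for t
  define dl where "dl t = xe t - xe (Suc t)" for t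
  have dl0: "\<And>t. t < n \<Longrightarrow> 0 \<le> dl t" unfolding dl_def xe_def using anti xpos by auto
  have xrep: "\<And>m. m < n \<Longrightarrow> x m = (\<Sum>t<n. if m \<le> t then dl t else 0)"
  proof -
    fix m assume m: "m < n"
    have se: "{t\<in>{..<n}. m \<le> t} = {m..<n}" by auto
    have "(\<Sum>t<n. if m \<le> t then dl t else 0) = (\<Sum>t\<in>{m..<n}. dl t)"
      unfolding sum_if_filter se ..
    also have "\<dots> = - (\<Sum>t\<in>{m..<n}. xe (Suc t) - xe t)" unfolding dl_def
      by (simp add: sum_negf[symmetric])
    also have "\<dots> = xe m - xe n" using sum_Suc_diff'[of m n xe] m by simp
    finally show "x m = (\<Sum>t<n. if m \<le> t then dl t else 0)" unfolding xe_def using m by simp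
  qed
  define w where "w t l = (\<Sum>m<n. if m \<le> t then M l m else 0)" for t l
  have "(\<Sum>l<n. \<Sum>m<n. mu l * x m * M l m) =
        (\<Sum>l<n. \<Sum>m<n. \<Sum>t<n. mu l * M l m * (if m \<le> t then dl t else 0))"
    by (rule sum.cong[OF refl], rule sum.cong[OF refl], subst xrep, auto simp: sum_distrib_left mult_ac)
  also have "\<dots> = (\<Sum>l<n. \<Sum>t<n. \<Sum>m<n. mu l * M l m * (if m \<le> t then dl t else 0))"
    by (rule sum.cong[OF refl], rule sum.swap)
  also have "\<dots> = (\<Sum>t<n. \<Sum>l<n. \<Sum>m<n. mu l * M l m * (if m \<le> t then dl t else 0))"
    by (rule sum.swap)
  also have "\<dots> = (\<Sum>t<n. dl t * (\<Sum>l<n. mu l * w t l))"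
    unfolding w_def by (rule sum.cong[OF refl], auto simp: sum_distrib_left mult_ac intro!: sum.cong)
  finally have R: "(\<Sum>l<n. \<Sum>m<n. mu l * x m * M l m) = (\<Sum>t<n. dl t * (\<Sum>l<n. mu l * w t l))" .
  have LPt: "\<And>t. t < n \<Longrightarrow> (\<Sum>l<n. if l \<le> t then mu l else 0) \<le> (\<Sum>l<n. mu l * w t l)"
  proof -
    fix t assume t: "t < n"
    have wb: "\<And>l. 0 \<le> l \<Longrightarrow> l < n \<Longrightarrow> 0 \<le> w t l \<and> w t l \<le> 1"
    proof -
      fix l assume l: "l < n"
      have "0 \<le> w t l" unfolding w_def using Mpos l by (auto intro: sum_nonneg)
      moreover have "w t l \<le> (\<Sum>m<n. M l m)" unfolding w_def using Mpos l by (auto intro: sum_mono)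
      ultimately show "0 \<le> w t l \<and> w t l \<le> 1" using rows l by simp
    qed
    have sw: "(\<Sum>l\<in>{0..<n}. w t l) = real (Suc t)"
    proof -
      have "(\<Sum>l\<in>{0..<n}. w t l) = (\<Sum>m<n. \<Sum>l<n. if m \<le> t then M l m else 0)"
        unfolding w_def atLeast0LessThan by (rule sum.swap)
      also have "\<dots> = (\<Sum>m<n. if m \<le> t then 1 else 0)"
        by (rule sum.cong[OF refl], insert cols, auto)
      also have "\<dots> = (\<Sum>m\<in>{0..<Suc t}. 1)"
      proof -
        have se: "{m\<in>{..<n}. m \<le> t} = {0..<Suc t}" using t by auto
        show ?thesis unfolding sum_if_filter se ..
      qed
      finally show ?thesis by simp
    qed
    have "(\<Sum>l\<in>{0..<0 + Suc t}. mu l) \<le> (\<Sum>l\<in>{0..<n}. mu l * w t l)"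
      by (rule lp_bound[OF _ wb sw], insert mono t, auto)
    moreover have "(\<Sum>l<n. if l \<le> t then mu l else 0) = (\<Sum>l\<in>{0..<0 + Suc t}. mu l)"
    proof -
      have se: "{l\<in>{..<n}. l \<le> t} = {0..<0 + Suc t}" using t by auto
      show ?thesis unfolding sum_if_filter se ..
    qed
    ultimately show "(\<Sum>l<n. if l \<le> t then mu l else 0) \<le> (\<Sum>l<n. mu l * w t l)"
      by (simp add: atLeast0LessThan)
  qed
  have "(\<Sum>t<n. dl t * (\<Sum>l<n. if l \<le> t then mu l else 0)) \<le> (\<Sum>t<n. dl t * (\<Sum>l<n. mu l * w t l))"
    by (rule sum_mono, rule mult_left_mono, insert LPt dl0, auto)
  moreover have "(\<Sum>t<n. dl t * (\<Sum>l<n. if l \<le> t then mu l else 0)) = (\<Sum>l<n. mu l * x l)"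
  proof -
    have "(\<Sum>t<n. dl t * (\<Sum>l<n. if l \<le> t then mu l else 0)) = (\<Sum>t<n. \<Sum>l<n. mu l * (if l \<le> t then dl t else 0))"
      by (auto simp: sum_distrib_left mult_ac intro!: sum.cong)
    also have "\<dots> = (\<Sum>l<n. \<Sum>t<n. mu l * (if l \<le> t then dl t else 0))" by (rule sum.swap)
    also have "\<dots> = (\<Sum>l<n. mu l * x l)"
      by (rule sum.cong[OF refl], subst xrep, auto simp: sum_distrib_left)
    finally show ?thesis .
  qed
  ultimately show ?thesis unfolding R by simp
qed

lemma ln_ineq: "0 < (t::real) \<Longrightarrow> 1 + ln t \<le> t"
  using ln_le_minus_one by force

lemma sum_split_at: "k \<le> (d::nat) \<Longrightarrow> (\<Sum>i<d. f i) = (\<Sum>i<k. f i) + (\<Sum>i\<in>{k..<d}. (f i :: real))"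
  by (simp add: lessThan_atLeast0 sum.atLeastLessThan_concat)

lemma final_scalar:
  fixes mu x :: "nat \<Rightarrow> real"
  assumes mono: "\<And>i i'. i \<le> i' \<Longrightarrow> i' < d \<Longrightarrow> mu i \<le> mu i'"
    and mupos: "\<And>i. i < d \<Longrightarrow> 0 < mu i"
    and anti: "\<And>i i'. i \<le> i' \<Longrightarrow> i' < d \<Longrightarrow> x i' \<le> x i"
    and xnn: "\<And>i. i < d \<Longrightarrow> 0 \<le> x i"
    and kj: "k < j" "j \<le> d"
    and xk: "\<And>i. i < k \<Longrightarrow> 0 < x i"
    and adef: "a = (\<Sum>i\<in>{k..<d}. x i) / real (j - k)" and apos: "0 < a"
    and xle: "x k \<le> a"
  shows "real j + (\<Sum>i<j. ln (mu i)) + ((\<Sum>i<k. ln (x i)) + real (j - k) * ln a)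
         \<le> (\<Sum>i<d. mu i * x i)"
proof -
  have s1: "(\<Sum>i<k. 1 + ln (mu i) + ln (x i)) \<le> (\<Sum>i<k. mu i * x i)"
  proof (rule sum_mono)
    fix i assume i: "i \<in> {..<k}"
    hence p: "0 < mu i" "0 < x i" using mupos xk kj by auto
    from ln_ineq[of "mu i * x i"] p show "1 + ln (mu i) + ln (x i) \<le> mu i * x i"
      by (simp add: ln_mult)
  qed
  have w: "\<And>i. k \<le> i \<Longrightarrow> i < d \<Longrightarrow> 0 \<le> x i / a \<and> x i / a \<le> 1"
  proof -
    fix i assume "k \<le> i" "i < d"
    hence "x i \<le> x k" "0 \<le> x i" using anti xnn by auto
    thus "0 \<le> x i / a \<and> x i / a \<le> 1" using xle apos by auto
  qed
  have sw: "(\<Sum>i\<in>{k..<d}. x i / a) = real (j - k)"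
  proof -
    have "(\<Sum>i\<in>{k..<d}. x i / a) = (\<Sum>i\<in>{k..<d}. x i) / a" by (simp add: sum_divide_distrib)
    also have "(\<Sum>i\<in>{k..<d}. x i) = a * real (j - k)" unfolding adef using kj by simp
    finally show ?thesis using apos by simp
  qed
  have lp: "(\<Sum>i\<in>{k..<k + (j - k)}. mu i) \<le> (\<Sum>i\<in>{k..<d}. mu i * (x i / a))"
    by (rule lp_bound[OF _ w sw], insert mono kj, auto)
  have "(\<Sum>i\<in>{k..<j}. 1 + ln a + ln (mu i)) \<le> (\<Sum>i\<in>{k..<j}. a * mu i)"
  proof (rule sum_mono)
    fix i assume i: "i \<in> {k..<j}"
    hence p: "0 < mu i" using mupos kj by auto
    from ln_ineq[of "a * mu i"] p apos show "1 + ln a + ln (mu i) \<le> a * mu i"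
      by (simp add: ln_mult)
  qed
  also have "\<dots> = a * (\<Sum>i\<in>{k..<k + (j - k)}. mu i)" using kj by (simp add: sum_distrib_left)
  also have "\<dots> \<le> a * (\<Sum>i\<in>{k..<d}. mu i * (x i / a))" using lp apos by simp
  also have "\<dots> = (\<Sum>i\<in>{k..<d}. mu i * x i)" using apos by (simp add: sum_distrib_left)
  finally have s2: "(\<Sum>i\<in>{k..<j}. 1 + ln a + ln (mu i)) \<le> (\<Sum>i\<in>{k..<d}. mu i * x i)" .
  have e2: "(\<Sum>i\<in>{k..<j}. 1 + ln a + ln (mu i)) = real (j - k) * (1 + ln a) + (\<Sum>i\<in>{k..<j}. ln (mu i))"
    using kj by (simp add: sum.distrib)
  have e1: "(\<Sum>i<k. 1 + ln (mu i) + ln (x i)) = real k + (\<Sum>i<k. ln (mu i)) + (\<Sum>i<k. ln (x i))"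
    by (simp add: sum.distrib)
  have sp1: "(\<Sum>i<d. mu i * x i) = (\<Sum>i<k. mu i * x i) + (\<Sum>i\<in>{k..<d}. mu i * x i)"
    by (rule sum_split_at, insert kj, auto)
  have sp2: "(\<Sum>i<j. ln (mu i)) = (\<Sum>i<k. ln (mu i)) + (\<Sum>i\<in>{k..<j}. ln (mu i))"
    by (rule sum_split_at, insert kj, auto)
  have rj: "real j = real k + real (j - k)" using kj by simp
  have e3: "real (j - k) * (1 + ln a) = real (j - k) + real (j - k) * ln a" by (simp add: algebra_simps)
  show ?thesis unfolding sp1 sp2 using s1 s2 e1 e2 e3 rj by linarith
qed


lemma S_step: "m < d \<Longrightarrow> (\<Sum>i\<in>{m..<d}. x i) = x m + (\<Sum>i\<in>{Suc m..<d}. (x i :: real))"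
  by (simp add: sum.atLeast_Suc_lessThan)

lemma gk_unique:
  fixes x :: "nat \<Rightarrow> real"
  assumes anti: "\<And>i i'. i \<le> i' \<Longrightarrow> i' < d \<Longrightarrow> x i' \<le> x i"
    and xnn: "\<And>i. i < d \<Longrightarrow> 0 \<le> x i"
    and j: "1 \<le> j" "j \<le> d"
  shows "\<exists>!k. k \<le> j - 1 \<and> (k = 0 \<or> x (k - 1) > (\<Sum>i\<in>{k..<d}. x i) / real (j - k)) \<and>
      (\<Sum>i\<in>{k..<d}. x i) / real (j - k) \<ge> x k"
proof -
  define S where "S k = (\<Sum>i\<in>{k..<d}. x i)" for k
  define P where "P k \<longleftrightarrow> S k / real (j - k) \<ge> x k" for k
  have Pm: "\<And>m. m < j \<Longrightarrow> P m \<longleftrightarrow> S m \<ge> real (j - m) * x m"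
    unfolding P_def by (simp add: pos_le_divide_eq mult.commute)
  have Pj: "P (j - 1)"
  proof -
    have "S (j - 1) = x (j - 1) + S j" unfolding S_def using j S_step[of "j - 1" d x] by simp
    moreover have "S j \<ge> 0" unfolding S_def using xnn by (auto intro: sum_nonneg)
    ultimately show ?thesis using Pm[of "j - 1"] j by simp
  qed
  define k0 where "k0 = (LEAST k. P k)"
  have Pk0: "P k0" unfolding k0_def by (rule LeastI[of P "j - 1"], rule Pj)
  have k0j: "k0 \<le> j - 1" unfolding k0_def by (rule Least_le, rule Pj)
  have c0: "k0 = 0 \<or> x (k0 - 1) > S k0 / real (j - k0)"
  proof (cases "k0 = 0")
    case False
    then obtain m where m: "k0 = Suc m" by (cases k0, auto)
    have "\<not> P m" using not_less_Least[of m P] m unfolding k0_def by auto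
    hence "S m < real (j - m) * x m" using Pm[of m] m k0j j by auto
    moreover have "S m = x m + S k0" unfolding S_def m using S_step[of m d x] m k0j j by simp
    moreover have "real (j - m) = real (j - k0) + 1" using m k0j j by simp
    ultimately have "S k0 < real (j - k0) * x m" by (simp add: algebra_simps)
    hence "S k0 / real (j - k0) < x m" using m k0j j by (simp add: pos_divide_less_eq mult.commute)
    thus ?thesis using m by simp
  qed simp
  have uniq: "\<And>k k'. k \<le> j - 1 \<Longrightarrow> P k \<Longrightarrow> k < k' \<Longrightarrow> k' \<le> j - 1 \<Longrightarrow> \<not> (x (k' - 1) > S k' / real (j - k'))"
  proof -
    fix k k' assume k: "k \<le> j - 1" "P k" "k < k'" "k' \<le> j - 1"
    have step: "\<And>m. m < j - 1 \<Longrightarrow> P m \<Longrightarrow> S (Suc m) \<ge> real (j - Suc m) * x m"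
    proof -
      fix m assume m: "m < j - 1" "P m"
      hence "S m \<ge> real (j - m) * x m" using Pm[of m] by auto
      moreover have "S m = x m + S (Suc m)" unfolding S_def using S_step[of m d x] m j by simp
      moreover have "real (j - m) = real (j - Suc m) + 1" using m by simp
      ultimately show "S (Suc m) \<ge> real (j - Suc m) * x m" by (simp add: algebra_simps)
    qed
    have ind: "\<And>t. k + Suc t \<le> j - 1 \<Longrightarrow> S (k + Suc t) \<ge> real (j - (k + Suc t)) * x (k + t)"
    proof -
      fix t show "k + Suc t \<le> j - 1 \<Longrightarrow> S (k + Suc t) \<ge> real (j - (k + Suc t)) * x (k + t)"
      proof (induct t)
        case 0 thus ?case using step[of k] k by simp
      next
        case (Suc t)
        hence IH: "S (k + Suc t) \<ge> real (j - (k + Suc t)) * x (k + t)" by simp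
        have "x (k + Suc t) \<le> x (k + t)" using anti Suc j by simp
        hence "real (j - (k + Suc t)) * x (k + Suc t) \<le> real (j - (k + Suc t)) * x (k + t)"
          by (intro mult_left_mono, auto)
        hence "P (k + Suc t)" using IH Pm[of "k + Suc t"] Suc j by simp
        from step[OF _ this] Suc show ?case by simp
      qed
    qed
    obtain t where t: "k' = k + Suc t" using k by (metis less_iff_Suc_add add_Suc_right)
    from ind[of t] k t have "S k' \<ge> real (j - k') * x (k' - 1)" by simp
    hence "S k' / real (j - k') \<ge> x (k' - 1)" using k j by (simp add: pos_le_divide_eq mult.commute)
    thus "\<not> (x (k' - 1) > S k' / real (j - k'))" by simp
  qed
  show ?thesis unfolding S_def[symmetric] P_def[symmetric]
  proof (rule ex1I[of _ k0])
    show "k0 \<le> j - 1 \<and> (k0 = 0 \<or> S k0 / real (j - k0) < x (k0 - 1)) \<and> P k0" using k0j c0 Pk0 by auto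
    fix k assume k: "k \<le> j - 1 \<and> (k = 0 \<or> S k / real (j - k) < x (k - 1)) \<and> P k"
    show "k = k0"
    proof (rule ccontr)
      assume ne: "k \<noteq> k0"
      show False
      proof (cases "k < k0")
        case True
        thus False using uniq[of k k0] k k0j c0 by auto
      next
        case False
        hence "k0 < k" using ne by simp
        thus False using uniq[of k0 k] k k0j Pk0 by auto
      qed
    qed
  qed
qed


lemma quad_form:
  assumes U: "orth n U" and es: "length es = n" and v: "v \<in> carrier_vec n"
  shows "v \<bullet> ((U * dg es * U\<^sup>T) *\<^sub>v v) = (\<Sum>m<n. es ! m * (\<Sum>a<n. U $$ (a, m) * v $ a)\<^sup>2)"
proof -
  have Uc: "U \<in> carrier_mat n n" using U unfolding orth_def by auto
  have Ac: "U * dg es * U\<^sup>T \<in> carrier_mat n n" using Uc es by auto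
  have "v \<bullet> ((U * dg es * U\<^sup>T) *\<^sub>v v) = (\<Sum>a<n. v $ a * (\<Sum>b<n. (U * dg es * U\<^sup>T) $$ (a, b) * v $ b))"
    using v Ac Uc by (auto simp: scalar_prod_def mult_mat_vec_def lessThan_atLeast0 simp del: assoc_mult_mat intro!: sum.cong)
  also have "\<dots> = (\<Sum>a<n. \<Sum>b<n. v $ a * v $ b * (\<Sum>m<n. es ! m * U $$ (a, m) * U $$ (b, m)))"
    by (rule sum.cong[OF refl], auto simp: sum_distrib_left spec_entry[OF U es] mult_ac intro!: sum.cong)
  also have "\<dots> = (\<Sum>m<n. es ! m * (\<Sum>a<n. U $$ (a, m) * v $ a)\<^sup>2)"
    by (rule quad_sum[of "\<lambda>a. v $ a" "\<lambda>m. es ! m" "\<lambda>a m. U $$ (a, m)" n])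
  finally show ?thesis .
qed

lemma norm_pres:
  assumes U: "orth n U"
  shows "(\<Sum>m<n. (\<Sum>a<n. U $$ (a, m) * p a)\<^sup>2) = (\<Sum>a<n. (p a)\<^sup>2)"
proof -
  have "(\<Sum>m<n. (\<Sum>a<n. U $$ (a, m) * p a)\<^sup>2) = (\<Sum>m<n. (\<lambda>_. 1) m * (\<Sum>a<n. U $$ (a, m) * p a)\<^sup>2)" by simp
  also have "\<dots> = (\<Sum>a<n. \<Sum>b<n. p a * p b * (\<Sum>m<n. (\<lambda>_. 1) m * U $$ (a, m) * U $$ (b, m)))"
    by (rule quad_sum[symmetric])
  also have "\<dots> = (\<Sum>a<n. \<Sum>b<n. if a = b then p a * p b else 0)"
    by (rule sum.cong[OF refl], rule sum.cong[OF refl], insert orth_rows[OF U], auto)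
  also have "\<dots> = (\<Sum>a<n. (p a)\<^sup>2)" by (simp add: power2_eq_square)
  finally show ?thesis .
qed

lemma eig_quad:
  assumes U: "orth n U" and es: "length es = n" and m0: "m0 < n"
  shows "col U m0 \<bullet> ((U * dg es * U\<^sup>T) *\<^sub>v col U m0) = es ! m0"
    and "col U m0 \<in> carrier_vec n" "col U m0 \<noteq> 0\<^sub>v n"
proof -
  have Uc: "U \<in> carrier_mat n n" using U unfolding orth_def by auto
  show cc: "col U m0 \<in> carrier_vec n" using Uc m0 by auto
  have "col U m0 \<bullet> ((U * dg es * U\<^sup>T) *\<^sub>v col U m0) = (\<Sum>m<n. es ! m * (\<Sum>a<n. U $$ (a, m) * col U m0 $ a)\<^sup>2)"
    by (rule quad_form[OF U es cc])
  also have "\<dots> = (\<Sum>m<n. if m = m0 then es ! m else 0)"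
  proof (rule sum.cong[OF refl])
    fix m assume m: "m \<in> {..<n}"
    have "(\<Sum>a<n. U $$ (a, m) * col U m0 $ a) = (\<Sum>a<n. U $$ (a, m) * U $$ (a, m0))"
      using Uc m0 by (auto intro!: sum.cong)
    also have "\<dots> = (if m = m0 then 1 else 0)" using orth_cols[OF U, of m m0] m m0 by auto
    finally show "es ! m * (\<Sum>a<n. U $$ (a, m) * col U m0 $ a)\<^sup>2 = (if m = m0 then es ! m else 0)" by simp
  qed
  also have "\<dots> = es ! m0" using m0 by simp
  finally show "col U m0 \<bullet> ((U * dg es * U\<^sup>T) *\<^sub>v col U m0) = es ! m0" .
  have one: "(\<Sum>a<n. U $$ (a, m0) * U $$ (a, m0)) = 1" using orth_cols[OF U m0 m0] by simp
  show "col U m0 \<noteq> 0\<^sub>v n"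
  proof
    assume z: "col U m0 = 0\<^sub>v n"
    have "\<And>a. a < n \<Longrightarrow> U $$ (a, m0) = 0"
    proof -
      fix a assume a: "a < n"
      have "U $$ (a, m0) = col U m0 $ a" using Uc m0 a by simp
      thus "U $$ (a, m0) = 0" unfolding z using a by simp
    qed
    hence "(\<Sum>a<n. U $$ (a, m0) * U $$ (a, m0)) = 0" by simp
    thus False using one by simp
  qed
qed

lemma trace_formula:
  assumes U: "orth n U" and V: "orth n V" and x: "length x = n" and mu: "length mu = n"
  shows "mat_trace ((V * dg mu * V\<^sup>T) * (U * dg x * U\<^sup>T)) =
    (\<Sum>l<n. \<Sum>m<n. mu ! l * x ! m * (\<Sum>a<n. V $$ (a, l) * U $$ (a, m))\<^sup>2)"
proof -
  have Uc: "U \<in> carrier_mat n n" using U unfolding orth_def by auto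
  have Vc: "V \<in> carrier_mat n n" using V unfolding orth_def by auto
  have c1: "V * dg mu * V\<^sup>T \<in> carrier_mat n n" using Vc mu by auto
  have c2: "U * dg x * U\<^sup>T \<in> carrier_mat n n" using Uc x by auto
  have "mat_trace ((V * dg mu * V\<^sup>T) * (U * dg x * U\<^sup>T)) =
    (\<Sum>a<n. \<Sum>b<n. (V * dg mu * V\<^sup>T) $$ (a, b) * (U * dg x * U\<^sup>T) $$ (b, a))"
    by (rule trace_prod[OF c1 c2])
  also have "\<dots> = (\<Sum>a<n. \<Sum>b<n. (\<Sum>l<n. mu ! l * V $$ (a, l) * V $$ (b, l)) * (\<Sum>m<n. x ! m * U $$ (b, m) * U $$ (a, m)))"
    by (rule sum.cong[OF refl], rule sum.cong[OF refl], auto simp: spec_entry[OF U x] spec_entry[OF V mu])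
  also have "\<dots> = (\<Sum>l<n. \<Sum>m<n. mu ! l * x ! m * (\<Sum>a<n. V $$ (a, l) * U $$ (a, m))\<^sup>2)"
    by (rule trace_sum)
  finally show ?thesis .
qed

lemma dstoch:
  assumes U: "orth n U" and V: "orth n V"
  shows "\<And>l. l < n \<Longrightarrow> (\<Sum>m<n. (\<Sum>a<n. V $$ (a, l) * U $$ (a, m))\<^sup>2) = 1"
    and "\<And>m. m < n \<Longrightarrow> (\<Sum>l<n. (\<Sum>a<n. V $$ (a, l) * U $$ (a, m))\<^sup>2) = 1"
proof -
  fix l assume l: "l < n"
  have "(\<Sum>m<n. (\<Sum>a<n. V $$ (a, l) * U $$ (a, m))\<^sup>2) = (\<Sum>m<n. (\<Sum>a<n. U $$ (a, m) * V $$ (a, l))\<^sup>2)"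
    by (simp add: mult.commute)
  also have "\<dots> = (\<Sum>a<n. (V $$ (a, l))\<^sup>2)" by (rule norm_pres[OF U])
  also have "\<dots> = 1" using orth_cols[OF V l l] by (simp add: power2_eq_square)
  finally show "(\<Sum>m<n. (\<Sum>a<n. V $$ (a, l) * U $$ (a, m))\<^sup>2) = 1" .
next
  fix m assume m: "m < n"
  have "(\<Sum>l<n. (\<Sum>a<n. V $$ (a, l) * U $$ (a, m))\<^sup>2) = (\<Sum>a<n. (U $$ (a, m))\<^sup>2)" by (rule norm_pres[OF V])
  also have "\<dots> = 1" using orth_cols[OF U m m] by (simp add: power2_eq_square)
  finally show "(\<Sum>l<n. (\<Sum>a<n. V $$ (a, l) * U $$ (a, m))\<^sup>2) = 1" .
qed


lemma dg_transpose: "(dg w)\<^sup>T = dg w"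
  by (rule eq_matI, auto simp: dg_def)

lemma spec_sym:
  assumes U: "orth n U" and w: "length w = n"
  shows "(U * dg w * U\<^sup>T)\<^sup>T = U * dg w * U\<^sup>T"
proof -
  have Uc: "U \<in> carrier_mat n n" using U unfolding orth_def by auto
  have D: "dg w \<in> carrier_mat n n" using w by auto
  have 1: "(U * dg w * U\<^sup>T)\<^sup>T = (U\<^sup>T)\<^sup>T * (U * dg w)\<^sup>T"
    by (rule transpose_mult[of _ n n _ n], insert Uc D, auto)
  have 2: "(U * dg w)\<^sup>T = (dg w)\<^sup>T * U\<^sup>T"
    by (rule transpose_mult[of _ n n _ n], insert Uc D, auto)
  show ?thesis unfolding 1 2 dg_transpose using Uc D by (simp add: assoc_mult_mat[of _ n n _ n _ n])
qed

lemma spec_pd: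
  assumes U: "orth n U" and w: "length w = n" and wpos: "\<And>m. m < n \<Longrightarrow> w ! m > 0"
  shows "pd_mat n (U * dg w * U\<^sup>T)"
proof -
  have Uc: "U \<in> carrier_mat n n" using U unfolding orth_def by auto
  have Wc: "U * dg w * U\<^sup>T \<in> carrier_mat n n" using Uc w by auto
  show ?thesis unfolding pd_mat_def sym_mat_def
  proof (intro conjI ballI impI)
    show "U * dg w * U\<^sup>T \<in> carrier_mat n n" by (rule Wc)
    show "(U * dg w * U\<^sup>T)\<^sup>T = U * dg w * U\<^sup>T" by (rule spec_sym[OF U w])
    fix v :: "real vec" assume v: "v \<in> carrier_vec n" and v0: "v \<noteq> 0\<^sub>v n"
    define c where "c m = (\<Sum>a<n. U $$ (a, m) * v $ a)" for m
    obtain a where a: "a < n" "v $ a \<noteq> 0" using v v0 by (metis eq_vecI carrier_vecD index_zero_vec)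
    have "(\<Sum>a<n. (v $ a)\<^sup>2) \<ge> (v $ a)\<^sup>2" by (rule member_le_sum, insert a, auto)
    hence "(\<Sum>a<n. (v $ a)\<^sup>2) > 0" using a by (smt (verit) zero_less_power2)
    hence "(\<Sum>m<n. (c m)\<^sup>2) > 0" unfolding c_def using norm_pres[OF U, of "\<lambda>a. v $ a"] by simp
    then obtain m where m: "m < n" "(c m)\<^sup>2 > 0"
      by (metis (no_types, lifting) lessThan_iff not_le sum_nonpos zero_less_power2 less_irrefl)
    have "v \<bullet> ((U * dg w * U\<^sup>T) *\<^sub>v v) = (\<Sum>m<n. w ! m * (c m)\<^sup>2)"
      unfolding c_def by (rule quad_form[OF U w v])
    also have "\<dots> \<ge> w ! m * (c m)\<^sup>2"
    proof (rule member_le_sum)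
      fix i assume "i \<in> {..<n} - {m}"
      hence "w ! i > 0" using wpos by auto
      thus "0 \<le> w ! i * (c i)\<^sup>2" by simp
    qed (insert m, auto)
    finally show "v \<bullet> ((U * dg w * U\<^sup>T) *\<^sub>v v) > 0" using m wpos[OF m(1)]
      by (smt (verit) mult_pos_pos)
  qed
qed

lemma spec_eigvals:
  assumes U: "orth n U" and w: "length w = n" and s: "sorted w"
  shows "eigvals (U * dg w * U\<^sup>T) = w"
proof -
  have Uc: "U \<in> carrier_mat n n" and o: "U\<^sup>T * U = 1\<^sub>m n" "U * U\<^sup>T = 1\<^sub>m n"
    using U unfolding orth_def by auto
  have D: "dg w \<in> carrier_mat n n" using w by auto
  have Wc: "U * dg w * U\<^sup>T \<in> carrier_mat n n" using Uc w by auto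
  have sim: "similar_mat (U * dg w * U\<^sup>T) (dg w)" unfolding similar_mat_def similar_mat_wit_def
    by (rule exI[of _ U], rule exI[of _ "U\<^sup>T"], insert Uc D Wc o, auto simp: Let_def)
  have ut: "upper_triangular (dg w)" unfolding upper_triangular_def dg_def by auto
  have dm: "diag_mat (dg w) = w" unfolding diag_mat_def dg_def
    by (rule nth_equalityI, auto)
  have "char_poly (U * dg w * U\<^sup>T) = (\<Prod>a\<leftarrow>w. [:- a, 1:])"
    unfolding char_poly_similar[OF sim] char_poly_upper_triangular[OF D ut] dm ..
  thus ?thesis by (rule eigvals_unique[OF Wc s w])
qed

lemma spec_eig_nonneg:
  assumes X: "psd_mat n (U * dg es * U\<^sup>T)" and U: "orth n U" and es: "length es = n" and m: "m < n"
  shows "es ! m \<ge> 0"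
  using X eig_quad[OF U es m] unfolding psd_mat_def by metis

lemma spec_eig_pos:
  assumes X: "pd_mat n (U * dg es * U\<^sup>T)" and U: "orth n U" and es: "length es = n" and m: "m < n"
  shows "es ! m > 0"
  using X eig_quad[OF U es m] unfolding pd_mat_def by metis

lemma rank_bound:
  assumes U: "orth n U" and x: "length x = n" and z: "\<And>m. r \<le> m \<Longrightarrow> m < n \<Longrightarrow> x ! m = 0"
  shows "vec_space.rank n (U * dg x * U\<^sup>T) \<le> r"
proof -
  have Uc: "U \<in> carrier_mat n n" using U unfolding orth_def by auto
  have Xc: "U * dg x * U\<^sup>T \<in> carrier_mat n n" using Uc x by auto
  show ?thesis
  proof (cases "n \<le> r")
    case True
    thus ?thesis using vec_space.rank_le_nc[OF Xc] by simp
  next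
    case False
    define Xp where "Xp t = mat n n (\<lambda>(a, b). \<Sum>m<t. x ! m * U $$ (a, m) * U $$ (b, m))" for t
    have rk: "vec_space.rank n (Xp t) \<le> t" for t
    proof (induct t)
      case 0
      have "Xp 0 = 0\<^sub>m n n" unfolding Xp_def by (rule eq_matI, auto)
      thus ?case using vec_space.rank_0I[of n n] by simp
    next
      case (Suc t)
      define R where "R = mat n n (\<lambda>(a, b). (x ! t * U $$ (a, t)) * U $$ (b, t))"
      have "Xp (Suc t) = Xp t + R" unfolding Xp_def R_def by (rule eq_matI, auto)
      moreover have "vec_space.rank n R \<le> 1"
        by (rule vec_space.rank_le_1_product_entries[of R n n "\<lambda>a. x ! t * U $$ (a, t)" "\<lambda>b. U $$ (b, t)"],
            auto simp: R_def)
      moreover have "vec_space.rank n (Xp t + R) \<le> vec_space.rank n (Xp t) + vec_space.rank n R"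
        by (rule vec_space.rank_subadditive, auto simp: Xp_def R_def)
      ultimately show ?case using Suc by simp
    qed
    have "U * dg x * U\<^sup>T = Xp r"
    proof (rule eq_matI)
      fix a b assume ab: "a < dim_row (Xp r)" "b < dim_col (Xp r)"
      hence ab': "a < n" "b < n" unfolding Xp_def by auto
      have "(U * dg x * U\<^sup>T) $$ (a, b) = (\<Sum>m<n. x ! m * U $$ (a, m) * U $$ (b, m))"
        by (rule spec_entry[OF U x ab'])
      also have "\<dots> = (\<Sum>m<r. x ! m * U $$ (a, m) * U $$ (b, m))"
      proof -
        have "(\<Sum>m<n. x ! m * U $$ (a, m) * U $$ (b, m)) = (\<Sum>m<r. x ! m * U $$ (a, m) * U $$ (b, m))
           + (\<Sum>m\<in>{r..<n}. x ! m * U $$ (a, m) * U $$ (b, m))"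
          using False by (simp add: lessThan_atLeast0 sum.atLeastLessThan_concat)
        moreover have "(\<Sum>m\<in>{r..<n}. x ! m * U $$ (a, m) * U $$ (b, m)) = 0"
          using z by auto
        ultimately show ?thesis by simp
      qed
      finally show "(U * dg x * U\<^sup>T) $$ (a, b) = Xp r $$ (a, b)" unfolding Xp_def using ab' by simp
    qed (insert Xc, auto simp: Xp_def)
    thus ?thesis using rk[of r] by simp
  qed
qed


lemma trace_lin:
  assumes "Z \<in> carrier_mat n n" "W \<in> carrier_mat n n" "X \<in> carrier_mat n n"
  shows "mat_trace ((Z - W) * (- X)) = mat_trace (W * X) - mat_trace (Z * X)"
proof -
  have c: "Z - W \<in> carrier_mat n n" "- X \<in> carrier_mat n n" using assms by auto
  show ?thesis unfolding trace_prod[OF c] trace_prod[OF assms(2,3)] trace_prod[OF assms(1,3)]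
    using assms by (simp add: sum_subtractf[symmetric] algebra_simps)
qed

lemma sum_shift1: "(\<Sum>i\<in>{1..k}. f i) = (\<Sum>i<k. f (Suc i))"
proof -
  have "{1..k} = {Suc 0..<Suc k}" by auto
  thus ?thesis by (simp only: sum.shift_bounds_Suc_ivl lessThan_atLeast0)
qed

lemma sum_shift2: "(\<Sum>i\<in>{k<..d}. f i) = (\<Sum>i\<in>{k..<d}. f (Suc i))"
proof -
  have "{k<..d} = {Suc k..<Suc d}" by auto
  thus ?thesis by (simp only: sum.shift_bounds_Suc_ivl)
qed


theorem lemma4p5:
  fixes d j :: nat and X :: "real mat"
  assumes "1 \<le> j" and "j \<le> d"
    and "psd_mat d X"
    and "vec_space.rank d X \<ge> j"
  shows "\<exists>W. pd_mat d W \<and> - X \<in> subdiff_Delta d j W \<and> Gamma j X = ereal (Delta j W)"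
proof -
  note j = assms(1,2)
  have Xc: "X \<in> carrier_mat d d" and Xs: "X\<^sup>T = X" using assms(3) unfolding psd_mat_def sym_mat_def by auto
  define ev where "ev = eigvals X"
  from eigvals_char[OF Xc Xs] have ev: "sorted ev" "length ev = d" unfolding ev_def by auto
  define xs where "xs = rev ev"
  have lxs: "length xs = d" unfolding xs_def using ev by simp
  from spectral[OF Xc Xs, of xs] obtain U where U: "orth d U" and Xeq: "X = U * dg xs * U\<^sup>T"
    unfolding xs_def ev_def by auto
  define x where "x i = xs ! i" for i
  have anti: "\<And>i i'. i \<le> i' \<Longrightarrow> i' < d \<Longrightarrow> x i' \<le> x i"
  proof -
    fix i i' assume "i \<le> i'" "i' < d"
    thus "x i' \<le> x i" unfolding x_def xs_def using ev by (simp add: rev_nth sorted_nth_mono)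
  qed
  have xnn: "\<And>i. i < d \<Longrightarrow> 0 \<le> x i" unfolding x_def
    using spec_eig_nonneg[OF _ U lxs] assms(3) Xeq by auto
  have xj: "0 < x (j - 1)"
  proof (rule ccontr)
    assume "\<not> 0 < x (j - 1)"
    hence z: "x (j - 1) = 0" using xnn[of "j - 1"] j by simp
    have "\<And>m. j - 1 \<le> m \<Longrightarrow> m < d \<Longrightarrow> xs ! m = 0"
      using anti[of "j - 1"] xnn z unfolding x_def by (metis order.antisym)
    from rank_bound[OF U lxs this] have "vec_space.rank d X \<le> j - 1" unfolding Xeq .
    thus False using assms(4) j by simp
  qed
  define S where "S k = (\<Sum>i\<in>{k..<d}. x i)" for k
  have ord: "\<And>i. 1 \<le> i \<Longrightarrow> ord_coord ev i = x (i - 1)"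
    unfolding ord_coord_def x_def xs_def using ev by (simp add: sorted_sort_id)
  have ordsum: "\<And>k. (\<Sum>i\<in>{k<..length ev}. ord_coord ev i) = S k"
    unfolding sum_shift2 S_def ev using ord by simp
  define cond where "cond k \<longleftrightarrow> k \<le> j - 1 \<and> (k = 0 \<or> x (k - 1) > S k / real (j - k)) \<and>
      S k / real (j - k) \<ge> x k" for k
  have ex1: "\<exists>!k. cond k" unfolding cond_def S_def by (rule gk_unique[OF anti xnn j])
  have gk: "gamma_k j ev = (THE k. cond k)" unfolding gamma_k_def ordsum
  proof (rule arg_cong[where f = The], rule ext)
    fix k
    show "(k \<le> j - 1 \<and> (k = 0 \<or> S k / real (j - k) < ord_coord ev k) \<and> ord_coord ev (k + 1) \<le> S k / real (j - k))
      = cond k" unfolding cond_def using ord[of k] ord[of "k + 1"] by (cases "k = 0", auto)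
  qed
  define k where "k = gamma_k j ev"
  have ck: "cond k" unfolding k_def gk by (rule theI'[OF ex1])
  hence kj: "k < j" and xle: "x k \<le> S k / real (j - k)"
    and xgt: "k > 0 \<Longrightarrow> x (k - 1) > S k / real (j - k)" unfolding cond_def using j by auto
  define a where "a = S k / real (j - k)"
  have Sk: "S k \<ge> x (j - 1)"
    unfolding S_def by (rule member_le_sum, insert xnn kj j, auto)
  have apos: "0 < a" unfolding a_def using Sk xj kj by simp
  have xk: "\<And>i. i < k \<Longrightarrow> 0 < x i"
  proof -
    fix i assume "i < k"
    hence "i \<le> j - 1" "j - 1 < d" using kj j by auto
    from anti[OF this] xj show "0 < x i" by simp
  qed
  define G where "G = (\<Sum>i<k. ln (x i)) + real (j - k) * ln a"
  have Gam: "Gamma j X = ereal G"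
  proof -
    have "Gamma j X = (\<Sum>i\<in>{1..k}. eln (ord_coord ev i)) + ereal (real (j - k)) * eln a"
      unfolding Gamma_def gamma_def Let_def ev_def[symmetric] k_def[symmetric] ordsum a_def ..
    also have "(\<Sum>i\<in>{1..k}. eln (ord_coord ev i)) = ereal (\<Sum>i<k. ln (x i))"
    proof -
      have "(\<Sum>i\<in>{1..k}. eln (ord_coord ev i)) = (\<Sum>i<k. ereal (ln (x i)))"
        unfolding sum_shift1 by (rule sum.cong, simp, insert ord xk, force simp: eln_def)
      thus ?thesis by (simp only: sum_ereal)
    qed
    also have "eln a = ereal (ln a)" unfolding eln_def using apos by simp
    finally show ?thesis unfolding G_def by simp
  qed
  define w where "w = map (\<lambda>m. if m < k then 1 / x m else 1 / a) [0..<d]"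
  have lw: "length w = d" unfolding w_def by simp
  have wn: "\<And>m. m < d \<Longrightarrow> w ! m = (if m < k then 1 / x m else 1 / a)" unfolding w_def by simp
  have wpos: "\<And>m. m < d \<Longrightarrow> w ! m > 0" using wn xk apos by simp
  have ws: "sorted w"
  proof (rule sorted_iff_nth_mono[THEN iffD2], intro allI impI)
    fix m m' assume mm: "m \<le> m'" "m' < length w"
    hence mm': "m \<le> m'" "m' < d" using lw by auto
    show "w ! m \<le> w ! m'"
    proof (cases "m' < k")
      case True
      hence "x m' \<le> x m" "0 < x m'" using anti mm' xk by auto
      thus ?thesis using wn mm' True by (simp add: frac_le)
    next
      case False
      show ?thesis
      proof (cases "m < k")
        case True
        hence "x (k - 1) \<le> x m" using anti mm' kj j by auto
        moreover have "a < x (k - 1)" using xgt True unfolding a_def by simp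
        ultimately have "a \<le> x m" by simp
        thus ?thesis using wn mm' True False apos by (simp add: frac_le)
      next
        case F2: False
        thus ?thesis using wn mm' False by simp
      qed
    qed
  qed
  define W where "W = U * dg w * U\<^sup>T"
  have Wpd: "pd_mat d W" unfolding W_def by (rule spec_pd[OF U lw wpos])
  have Wev: "eigvals W = w" unfolding W_def by (rule spec_eigvals[OF U lw ws])
  have DW: "Delta j W = G"
  proof -
    have "Delta j W = - (\<Sum>i<j. ln (w ! i))" unfolding Delta_def Wev ..
    also have "(\<Sum>i<j. ln (w ! i)) = (\<Sum>i<k. ln (w ! i)) + (\<Sum>i\<in>{k..<j}. ln (w ! i))"
      by (rule sum_split_at, insert kj, auto)
    also have "(\<Sum>i<k. ln (w ! i)) = - (\<Sum>i<k. ln (x i))"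
      using wn xk kj j by (auto simp: ln_div sum_negf[symmetric] intro!: sum.cong)
    also have "(\<Sum>i\<in>{k..<j}. ln (w ! i)) = - real (j - k) * ln a"
      using wn apos kj j by (auto simp: ln_div algebra_simps)
    finally show ?thesis unfolding G_def by simp
  qed
  have Wc: "W \<in> carrier_mat d d" using Wpd unfolding pd_mat_def sym_mat_def by auto
  have trWX: "mat_trace (W * X) = real j"
  proof -
    have "mat_trace (W * X) = (\<Sum>l<d. \<Sum>m<d. w ! l * xs ! m * (\<Sum>a<d. U $$ (a, l) * U $$ (a, m))\<^sup>2)"
      unfolding W_def Xeq by (rule trace_formula[OF U U lxs lw])
    also have "\<dots> = (\<Sum>l<d. \<Sum>m<d. if l = m then w ! l * x l else 0)"
      by (rule sum.cong[OF refl], rule sum.cong[OF refl], insert orth_cols[OF U], auto simp: x_def)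
    also have "\<dots> = (\<Sum>l<d. w ! l * x l)" by simp
    also have "\<dots> = (\<Sum>l<k. w ! l * x l) + (\<Sum>l\<in>{k..<d}. w ! l * x l)"
      by (rule sum_split_at, insert kj j, auto)
    also have "(\<Sum>l<k. w ! l * x l) = (\<Sum>l<k. 1)"
      by (rule sum.cong[OF refl], insert wn xk kj j, force)
    also have "(\<Sum>l<k. (1::real)) = real k" by simp
    also have "(\<Sum>l\<in>{k..<d}. w ! l * x l) = (\<Sum>l\<in>{k..<d}. x l) / a"
      using wn by (auto simp: sum_divide_distrib intro!: sum.cong)
    also have "\<dots> = real (j - k)" unfolding a_def S_def[symmetric] using apos kj unfolding a_def
      by (simp add: field_simps)
    finally show ?thesis using kj by simp
  qed
  have sub: "- X \<in> subdiff_Delta d j W" unfolding subdiff_Delta_def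
  proof (intro CollectI conjI allI impI)
    show "sym_mat d (- X)" unfolding sym_mat_def using Xc Xs by (simp add: transpose_uminus)
    fix Z assume Zpd: "pd_mat d Z"
    hence Zc: "Z \<in> carrier_mat d d" and Zs: "Z\<^sup>T = Z" unfolding pd_mat_def sym_mat_def by auto
    define mu where "mu = eigvals Z"
    from eigvals_char[OF Zc Zs] have mu: "sorted mu" "length mu = d" unfolding mu_def by auto
    from spectral[OF Zc Zs, of mu] obtain V where V: "orth d V" and Zeq: "Z = V * dg mu * V\<^sup>T"
      unfolding mu_def by auto
    have mupos: "\<And>i. i < d \<Longrightarrow> 0 < mu ! i" using spec_eig_pos[OF _ V mu(2)] Zpd Zeq by auto
    have mumono: "\<And>i i'. i \<le> i' \<Longrightarrow> i' < d \<Longrightarrow> mu ! i \<le> mu ! i'"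
      using mu by (simp add: sorted_nth_mono)
    define M where "M l m = (\<Sum>a<d. V $$ (a, l) * U $$ (a, m))\<^sup>2" for l m
    have trZX: "mat_trace (Z * X) = (\<Sum>l<d. \<Sum>m<d. mu ! l * x m * M l m)"
      unfolding Zeq Xeq M_def x_def by (rule trace_formula[OF U V lxs mu(2)])
    have r1: "(\<Sum>l<d. mu ! l * x l) \<le> (\<Sum>l<d. \<Sum>m<d. mu ! l * x m * M l m)"
      by (rule rearr[OF mumono anti xnn], auto simp: M_def dstoch[OF U V])
    have r2: "real j + (\<Sum>i<j. ln (mu ! i)) + G \<le> (\<Sum>i<d. mu ! i * x i)"
      unfolding G_def by (rule final_scalar[OF mumono mupos anti xnn kj j(2) xk a_def[unfolded S_def] apos xle[folded a_def]])
    have "mat_trace ((Z - W) * (- X)) = real j - mat_trace (Z * X)"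
      unfolding trace_lin[OF Zc Wc Xc] trWX ..
    moreover have "Delta j Z = - (\<Sum>i<j. ln (mu ! i))" unfolding Delta_def mu_def ..
    ultimately show "Delta j W + mat_trace ((Z - W) * - X) \<le> Delta j Z"
      using r1 r2 trZX DW by linarith
  qed
  show ?thesis using Wpd sub Gam DW by auto
qed


end
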